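(* Under the hypotheses of Theorem 1 (i.e., $(\mathbf{A},\mathbf{C})$ observable and $\{\mathcal{G}[k]\}$ satisfying the joint strong-connectivity assumption with parameter $T$), there exist observer gains $\mathbf{L}_1,\dots,\mathbf{L}_N$ (namely, any gains such that each $\mathbf{A}_{jj}-\mathbf{L}_j\mathbf{C}_{jj}$ is nilpotent) such that, when every node runs the freshness-index algorithm, for all initial states and all initial estimates, $\hat{\mathbf{z}}_i[k]=\mathbf{z}[k]$ (equivalently $\hat{\mathbf{x}}_i[k]=\mathbf{T}\hat{\mathbf{z}}_i[k]=\mathbf{x}[k]$) for every $i\in\mathcal{V}$ and every $k\ge n+2N(N-1)T$.
   Context: Graphs. Nodes $\mathcal{V}=\{1,\dots,N\}$. At each time $k\in\mathbb{N}=\{0,1,2,\dots\}$ there is a directed graph $\mathcal{G}[k]=(\mathcal{V},\mathcal{E}[k])$; $(i,j)\in\mathcal{E}[k]$ means node $i$ can send information to node $j$ at time $k$. $\mathcal{N}_i[k]=\{l\neq i:(l,i)\in\mathcal{E}[k]\}$ is the set of neighbors of $i$ at time $k$. The union graph over an interval of times has vertex set $\mathcal{V}$ and edge set the union of the edge sets over that interval. Joint strong-connectivity assumption: there is $T\in\mathbb{N}_+=\{1,2,\dots\}$ such that for every $k\in\mathbb{N}$ the union graph over $[kT,(k+1)T)$ is strongly connected. System. $\mathbf{x}[k+1]=\mathbf{A}\mathbf{x}[k]$, $\mathbf{y}_i[k]=\mathbf{C}_i\mathbf{x}[k]$, $\mathbf{A}\in\mathbb{R}^{n\times n}$, $\mathbf{C}=[\mathbf{C}_1^T\cdots\mathbf{C}_N^T]^T$.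 Since $(\mathbf{A},\mathbf{C})$ is observable, there is an invertible $\mathbf{T}$ (fixed throughout) such that with $\mathbf{x}[k]=\mathbf{T}\mathbf{z}[k]$ one has $\mathbf{z}[k+1]=\bar{\mathbf{A}}\mathbf{z}[k]$, $\mathbf{y}_i[k]=\mathbf{C}_i\mathbf{T}\mathbf{z}[k]$, where $\mathbf{z}=[\mathbf{z}^{(1)T}\cdots\mathbf{z}^{(N)T}]^T$ with $\mathbf{z}^{(j)}\in\mathbb{R}^{n_j}$ ("substate $j$"), $\sum_j n_j=n$, $\bar{\mathbf{A}}=\mathbf{T}^{-1}\mathbf{A}\mathbf{T}$ is block lower triangular with blocks $\mathbf{A}_{jq}$ ($\mathbf{A}_{jq}=0$ for $q>j$), so $\mathbf{z}^{(j)}[k+1]=\mathbf{A}_{jj}\mathbf{z}^{(j)}[k]+\sum_{q=1}^{j-1}\mathbf{A}_{jq}\mathbf{z}^{(q)}[k]$; and $\mathbf{C}_i\mathbf{T}=[\mathbf{C}_{i1}\ \cdots\ \mathbf{C}_{ii}\ 0\ \cdots\ 0]$, so $\mathbf{y}_i[k]=\sum_{q=1}^{i}\mathbf{C}_{iq}\mathbf{z}^{(q)}[k]$; moreover each pair $(\mathbf{A}_{jj},\mathbf{C}_{jj})$ is observable. Node $j$ is called the source node of substate $j$. Freshness indices. For each substate $j$ and node $i$, node $i$ keeps $\tau^{(j)}_i[k]\in\{\omega\}\cup\mathbb{N}$, where $\omega$ is a special symbol. Initialization: $\tau^{(j)}_j[0]=0$, $\tau^{(j)}_i[0]=\omega$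 for $i\neq j$. The source keeps $\tau^{(j)}_j[k]=0$ for all $k$. For $i\neq j$, let $\mathcal{M}^{(j)}_i[k]=\{l\in\mathcal{N}_i[k]:\tau^{(j)}_l[k]\neq\omega\}$. Case 1, $\tau^{(j)}_i[k]=\omega$: if $\mathcal{M}^{(j)}_i[k]\neq\emptyset$, let $u$ be any minimizer of $\tau^{(j)}_l[k]$ over $l\in\mathcal{M}^{(j)}_i[k]$, set $\tau^{(j)}_i[k+1]=\tau^{(j)}_u[k]+1$ and perform an "adopt-$u$" estimate update; otherwise set $\tau^{(j)}_i[k+1]=\omega$ and perform an "open-loop" estimate update. Case 2, $\tau^{(j)}_i[k]\neq\omega$: let $\mathcal{F}^{(j)}_i[k]=\{l\in\mathcal{M}^{(j)}_i[k]:\tau^{(j)}_l[k]<\tau^{(j)}_i[k]\}$; if nonempty, let $u$ be any minimizer of $\tau^{(j)}_l[k]$ over $\mathcal{F}^{(j)}_i[k]$, set $\tau^{(j)}_i[k+1]=\tau^{(j)}_u[k]+1$ and perform an adopt-$u$ update; otherwise set $\tau^{(j)}_i[k+1]=\tau^{(j)}_i[k]+1$ and perform an open-loop update. Estimates. Each node $i$ keeps $\hat{\mathbf{z}}_i[k]=[\hat{\mathbf{z}}^{(1)T}_i[k]\cdots\hat{\mathbf{z}}^{(N)T}_i[k]]^T$, with arbitrary initial value. Source update for substate $j$: $\hat{\mathbf{z}}^{(j)}_j[k+1]=(\mathbf{A}_{jj}-\mathbf{L}_j\mathbf{C}_{jj})\hat{\mathbf{z}}^{(j)}_j[k]+\sum_{q=1}^{j-1}(\mathbf{A}_{jq}-\mathbf{L}_j\mathbf{C}_{jq})\hat{\mathbf{z}}^{(q)}_j[k]+\mathbf{L}_j\mathbf{y}_j[k]$.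 Adopt-$u$ update at node $i\ne j$: $\hat{\mathbf{z}}^{(j)}_i[k+1]=\mathbf{A}_{jj}\hat{\mathbf{z}}^{(j)}_u[k]+\sum_{q=1}^{j-1}\mathbf{A}_{jq}\hat{\mathbf{z}}^{(q)}_i[k]$. Open-loop update at node $i\neq j$: $\hat{\mathbf{z}}^{(j)}_i[k+1]=\mathbf{A}_{jj}\hat{\mathbf{z}}^{(j)}_i[k]+\sum_{q=1}^{j-1}\mathbf{A}_{jq}\hat{\mathbf{z}}^{(q)}_i[k]$. These updates are carried out for every substate $j$ at every time $k$. *)

theory Defs
  imports "Jordan_Normal_Form.Matrix"
begin

(* Nodes and substates are indexed by 0..<N (the paper uses 1..N). *)

definition vsum :: "nat \<Rightarrow> (nat \<Rightarrow> real vec) \<Rightarrow> nat \<Rightarrow> real vec" where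
  "vsum d f m = foldr (\<lambda>q acc. f q + acc) [0..<m] (0\<^sub>v d)"

(* observability of the pair (A, C), A of size d x d: the observability matrix
   [C; C A; ...; C A^(d-1)] has trivial kernel (i.e. full column rank d) *)
definition observable_pair :: "real mat \<Rightarrow> real mat \<Rightarrow> nat \<Rightarrow> bool" where
  "observable_pair A C d \<longleftrightarrow>
     (\<forall>v \<in> carrier_vec d. (\<forall>k<d. C *\<^sub>v ((A ^\<^sub>m k) *\<^sub>v v) = 0\<^sub>v (dim_row C)) \<longrightarrow> v = 0\<^sub>v d)"

definition nilpotent_mat :: "real mat \<Rightarrow> nat \<Rightarrow> bool" where
  "nilpotent_mat M d \<longleftrightarrow> (\<exists>p. M ^\<^sub>m p = 0\<^sub>m d d)"

definition nbrs :: "nat \<Rightarrow> (nat \<Rightarrow> (nat \<times> nat) set) \<Rightarrow> nat \<Rightarrow> nat \<Rightarrow> nat set" where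
  "nbrs N E k i = {l. l < N \<and> l \<noteq> i \<and> (l, i) \<in> E k}"

definition union_strongly_connected :: "nat \<Rightarrow> (nat \<Rightarrow> (nat \<times> nat) set) \<Rightarrow> nat set \<Rightarrow> bool" where
  "union_strongly_connected N E S \<longleftrightarrow>
     (\<forall>i<N. \<forall>j<N. (i, j) \<in> ((\<Union>k\<in>S. E k) \<inter> ({..<N} \<times> {..<N}))\<^sup>*)"

definition joint_strong_conn :: "nat \<Rightarrow> (nat \<Rightarrow> (nat \<times> nat) set) \<Rightarrow> nat \<Rightarrow> bool" where
  "joint_strong_conn N E T \<longleftrightarrow> T \<ge> 1 \<and>
     (\<forall>k. union_strongly_connected N E {k * T ..< (k + 1) * T})"

(* block data: substate j has dimension nd j, meas_output of node i has dimension pd i,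
   Ab j q = A_{jq} (q \<le> j), Cb i q = C_{iq} (q \<le> i) *)
definition block_system :: "nat \<Rightarrow> (nat \<Rightarrow> nat) \<Rightarrow> (nat \<Rightarrow> nat) \<Rightarrow>
    (nat \<Rightarrow> nat \<Rightarrow> real mat) \<Rightarrow> (nat \<Rightarrow> nat \<Rightarrow> real mat) \<Rightarrow> bool" where
  "block_system N nd pd Ab Cb \<longleftrightarrow>
     (\<forall>j<N. \<forall>q\<le>j. Ab j q \<in> carrier_mat (nd j) (nd q)) \<and>
     (\<forall>i<N. \<forall>q\<le>i. Cb i q \<in> carrier_mat (pd i) (nd q)) \<and>
     (\<forall>j<N. observable_pair (Ab j j) (Cb j j) (nd j))"

definition true_traj :: "nat \<Rightarrow> (nat \<Rightarrow> nat) \<Rightarrow> (nat \<Rightarrow> nat \<Rightarrow> real mat) \<Rightarrow>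
    (nat \<Rightarrow> nat \<Rightarrow> real vec) \<Rightarrow> bool" where
  "true_traj N nd Ab z \<longleftrightarrow>
     (\<forall>j<N. z 0 j \<in> carrier_vec (nd j)) \<and>
     (\<forall>k. \<forall>j<N. z (Suc k) j = Ab j j *\<^sub>v z k j + vsum (nd j) (\<lambda>q. Ab j q *\<^sub>v z k q) j)"

definition meas_output :: "(nat \<Rightarrow> nat) \<Rightarrow> (nat \<Rightarrow> nat \<Rightarrow> real mat) \<Rightarrow>
    (nat \<Rightarrow> nat \<Rightarrow> real vec) \<Rightarrow> nat \<Rightarrow> nat \<Rightarrow> real vec" where
  "meas_output pd Cb z k i = vsum (pd i) (\<lambda>q. Cb i q *\<^sub>v z k q) (Suc i)"

(* A run of the freshness-index algorithm. tau k i j = \<tau>^(j)_i[k] (None = \<omega>),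
   zh k i j = \<hat>z^(j)_i[k].  The minimiser u is chosen arbitrarily (any minimiser),
   the same u being used for the index and the estimate update. *)
definition fi_run :: "nat \<Rightarrow> (nat \<Rightarrow> nat) \<Rightarrow> (nat \<Rightarrow> nat) \<Rightarrow>
    (nat \<Rightarrow> nat \<Rightarrow> real mat) \<Rightarrow> (nat \<Rightarrow> nat \<Rightarrow> real mat) \<Rightarrow> (nat \<Rightarrow> real mat) \<Rightarrow>
    (nat \<Rightarrow> (nat \<times> nat) set) \<Rightarrow> (nat \<Rightarrow> nat \<Rightarrow> real vec) \<Rightarrow>
    (nat \<Rightarrow> nat \<Rightarrow> nat \<Rightarrow> nat option) \<Rightarrow> (nat \<Rightarrow> nat \<Rightarrow> nat \<Rightarrow> real vec) \<Rightarrow> bool" where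
  "fi_run N nd pd Ab Cb L E z tau zh \<longleftrightarrow>
     (\<forall>j<N. tau 0 j j = Some 0) \<and>
     (\<forall>i<N. \<forall>j<N. i \<noteq> j \<longrightarrow> tau 0 i j = None) \<and>
     (\<forall>i<N. \<forall>j<N. zh 0 i j \<in> carrier_vec (nd j)) \<and>
     (\<forall>k. \<forall>j<N.
        tau (Suc k) j j = Some 0 \<and>
        zh (Suc k) j j = (Ab j j - L j * Cb j j) *\<^sub>v zh k j j
           + vsum (nd j) (\<lambda>q. (Ab j q - L j * Cb j q) *\<^sub>v zh k j q) j
           + L j *\<^sub>v meas_output pd Cb z k j) \<and>
     (\<forall>k. \<forall>i<N. \<forall>j<N. i \<noteq> j \<longrightarrow>
        (let M = {l \<in> nbrs N E k i. tau k l j \<noteq> None};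
             adopt = (\<lambda>u. Ab j j *\<^sub>v zh k u j + vsum (nd j) (\<lambda>q. Ab j q *\<^sub>v zh k i q) j);
             openl = Ab j j *\<^sub>v zh k i j + vsum (nd j) (\<lambda>q. Ab j q *\<^sub>v zh k i q) j
         in case tau k i j of
              None \<Rightarrow>
                (if M \<noteq> {} then
                   (\<exists>u\<in>M. (\<forall>l\<in>M. the (tau k u j) \<le> the (tau k l j)) \<and>
                          tau (Suc k) i j = Some (the (tau k u j) + 1) \<and>
                          zh (Suc k) i j = adopt u)
                 else tau (Suc k) i j = None \<and> zh (Suc k) i j = openl)
            | Some t \<Rightarrow>
                (let F = {l \<in> M. the (tau k l j) < t} in
                 if F \<noteq> {} then
                   (\<exists>u\<in>F. (\<forall>l\<in>F. the (tau k u j) \<le> the (tau k l j)) \<and>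
                          tau (Suc k) i j = Some (the (tau k u j) + 1) \<and>
                          zh (Suc k) i j = adopt u)
                 else tau (Suc k) i j = Some (t + 1) \<and> zh (Suc k) i j = openl)))"

definition gains_ok :: "nat \<Rightarrow> (nat \<Rightarrow> nat) \<Rightarrow> (nat \<Rightarrow> nat) \<Rightarrow>
    (nat \<Rightarrow> nat \<Rightarrow> real mat) \<Rightarrow> (nat \<Rightarrow> nat \<Rightarrow> real mat) \<Rightarrow> (nat \<Rightarrow> real mat) \<Rightarrow> bool" where
  "gains_ok N nd pd Ab Cb L \<longleftrightarrow>
     (\<forall>j<N. L j \<in> carrier_mat (nd j) (pd j) \<and> nilpotent_mat (Ab j j - L j * Cb j j) (nd j))"

end

theory Submission
  imports Defs "Jordan_Normal_Form.Schur_Decomposition"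
begin

lemma strict_ut_pow_entries:
  fixes B :: "'a::comm_ring_1 mat"
  assumes B: "B \<in> carrier_mat n n" and ut: "\<forall>i<n. \<forall>j<n. j \<le> i \<longrightarrow> B $$ (i,j) = 0"
  shows "\<forall>i<n. \<forall>j<n. j < i + k \<longrightarrow> (B ^\<^sub>m k) $$ (i,j) = 0"
proof (induction k)
  case 0
  then show ?case using B by auto
next
  case (Suc k)
  show ?case
  proof (intro allI impI)
    fix i j assume i: "i < n" and j: "j < n" and ij: "j < i + Suc k"
    have P: "B ^\<^sub>m k \<in> carrier_mat n n" using B by simp
    have "(B ^\<^sub>m Suc k) $$ (i,j) = (\<Sum>l<n. (B ^\<^sub>m k) $$ (i,l) * B $$ (l,j))"
      using P B i j by (simp add: index_mult_mat scalar_prod_def atLeast0LessThan)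
    also have "\<dots> = 0"
    proof (rule sum.neutral, intro ballI)
      fix l assume l: "l \<in> {..<n}"
      show "(B ^\<^sub>m k) $$ (i,l) * B $$ (l,j) = 0"
      proof (cases "l < i + k")
        case True then show ?thesis using Suc.IH i l by auto
      next
        case False then have "j \<le> l" using ij by auto
        then show ?thesis using ut l j by auto
      qed
    qed
    finally show "(B ^\<^sub>m Suc k) $$ (i,j) = 0" .
  qed
qed

lemma nilpotent_pow_dim:
  fixes M :: "real mat"
  assumes M: "M \<in> carrier_mat n n" and nil: "nilpotent_mat M n"
  shows "M ^\<^sub>m n = 0\<^sub>m n n"
proof -
  obtain p where p: "M ^\<^sub>m p = 0\<^sub>m n n" using nil unfolding nilpotent_mat_def by auto
  define Mc where "Mc = map_mat complex_of_real M"
  have Mc: "Mc \<in> carrier_mat n n" using M unfolding Mc_def by simp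
  have z0: "map_mat complex_of_real (0\<^sub>m n n) = 0\<^sub>m n n" by (rule eq_matI) auto
  have Mcp: "Mc ^\<^sub>m p = 0\<^sub>m n n"
    unfolding Mc_def using of_real_hom.mat_hom_pow[OF M, of p] p z0 by metis
  obtain as where cp: "char_poly Mc = (\<Prod> a \<leftarrow> as. [:- a, 1:])" and len: "length as = n"
    using char_poly_factorized[OF Mc] by auto
  have as0: "\<forall>a\<in>set as. a = 0"
  proof
    fix a assume a: "a \<in> set as"
    have "poly (char_poly Mc) a = 0" unfolding cp using a
      by (induction as) (auto simp: poly_prod_list)
    hence "eigenvalue Mc a" using eigenvalue_root_char_poly[OF Mc] by simp
    then obtain v where ev: "eigenvector Mc v a" unfolding eigenvalue_def by auto
    have "Mc ^\<^sub>m p *\<^sub>v v = a^p \<cdot>\<^sub>v v" by (rule eigenvector_pow[OF Mc ev])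
    moreover have v: "v \<in> carrier_vec n" "v \<noteq> 0\<^sub>v n" using ev Mc unfolding eigenvector_def by auto
    moreover have "0\<^sub>m n n *\<^sub>v v = 0\<^sub>v n" using v by (intro eq_vecI) auto
    ultimately have "a^p \<cdot>\<^sub>v v = 0\<^sub>v n" using Mcp by simp
    then obtain i where i: "i < n" "v $ i \<noteq> 0" using v by (metis eq_vecI carrier_vecD index_zero_vec(1,2))
    then have "a^p * v $ i = 0" using \<open>a^p \<cdot>\<^sub>v v = 0\<^sub>v n\<close> v
      by (metis index_smult_vec(1) index_zero_vec(1) carrier_vecD)
    hence "a^p = 0" using i by simp
    thus "a = 0" by simp
  qed
  obtain B P Q where sd: "schur_decomposition Mc as = (B,P,Q)" by (cases "schur_decomposition Mc as") auto
  from schur_decomposition[OF Mc cp sd]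
  have sim: "similar_mat_wit Mc B P Q" and ut: "upper_triangular B" and dg: "diag_mat B = as" by auto
  have B: "B \<in> carrier_mat n n" and PQ: "P \<in> carrier_mat n n" "Q \<in> carrier_mat n n"
    using sim Mc unfolding similar_mat_wit_def Let_def by auto
  have sut: "\<forall>i<n. \<forall>j<n. j \<le> i \<longrightarrow> B $$ (i,j) = 0"
  proof (intro allI impI)
    fix i j assume i: "i < n" and j: "j < n" and ji: "j \<le> i"
    show "B $$ (i,j) = 0"
    proof (cases "j = i")
      case True
      have "B $$ (i,i) = as ! i" using dg[symmetric] B i by (simp add: diag_mat_def)
      then show ?thesis using True as0 len i by auto
    next
      case False then show ?thesis using ut B i ji unfolding upper_triangular_def by auto
    qed
  qed
  have "B ^\<^sub>m n = 0\<^sub>m n n"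
    using strict_ut_pow_entries[OF B sut, of n] B by (intro eq_matI) auto
  hence "Mc ^\<^sub>m n = 0\<^sub>m n n" using similar_mat_wit_pow_id[OF sim, of n] PQ by simp
  hence "map_mat complex_of_real (M ^\<^sub>m n) = map_mat complex_of_real (0\<^sub>m n n)"
    unfolding Mc_def using of_real_hom.mat_hom_pow[OF M, of n] z0 by metis
  thus ?thesis by (rule of_real_hom.mat_hom_inj)
qed

declare minus_carrier_mat[simp]

lemma mat_eq_by_vec:
  fixes X Y :: "'a::comm_ring_1 mat"
  assumes X: "X \<in> carrier_mat r c" and Y: "Y \<in> carrier_mat r c"
    and h: "\<And>x. x \<in> carrier_vec c \<Longrightarrow> X *\<^sub>v x = Y *\<^sub>v x"
  shows "X = Y"
proof (rule eq_matI)
  fix i j assume i: "i < dim_row Y" and j: "j < dim_col Y"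
  have "X *\<^sub>v unit_vec c j = Y *\<^sub>v unit_vec c j" using h by simp
  hence "(X *\<^sub>v unit_vec c j) $ i = (Y *\<^sub>v unit_vec c j) $ i" by simp
  thus "X $$ (i, j) = Y $$ (i, j)" using X Y i j by simp
qed (use X Y in auto)

lemma assoc3_mv:
  assumes "A \<in> carrier_mat a b" "B \<in> carrier_mat b c" "C \<in> carrier_mat c e" "x \<in> carrier_vec e"
  shows "A * B * C *\<^sub>v x = A *\<^sub>v (B *\<^sub>v (C *\<^sub>v x))"
proof -
  have "A * B * C *\<^sub>v x = (A * B) *\<^sub>v (C *\<^sub>v x)" by (rule assoc_mult_mat_vec) (use assms in auto)
  also have "\<dots> = A *\<^sub>v (B *\<^sub>v (C *\<^sub>v x))" by (rule assoc_mult_mat_vec) (use assms in auto)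
  finally show ?thesis .
qed

lemma assoc2_mv:
  assumes "A \<in> carrier_mat a b" "B \<in> carrier_mat b c" "x \<in> carrier_vec c"
  shows "A * B *\<^sub>v x = A *\<^sub>v (B *\<^sub>v x)"
  by (rule assoc_mult_mat_vec) (use assms in auto)

lemma ginv_exists:
  fixes B :: "real mat"
  shows "B \<in> carrier_mat p d \<Longrightarrow> \<exists>R \<in> carrier_mat d p. B * R * B = B"
proof (induction p arbitrary: B)
  case 0
  show ?case
    by (rule bexI[of _ "0\<^sub>m d 0"], rule eq_matI) (use 0 in auto)
next
  case (Suc p)
  note B = Suc.prems
  define B1 where "B1 = mat p d (\<lambda>(i,j). B $$ (i,j))"
  define b where "b = row B p"
  have B1: "B1 \<in> carrier_mat p d" unfolding B1_def by simp
  have b: "b \<in> carrier_vec d" unfolding b_def using B by (metis row_carrier carrier_matD(2))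
  obtain R1 where R1: "R1 \<in> carrier_mat d p" and R1g: "B1 * R1 * B1 = B1" using Suc.IH[OF B1] by auto
  have R1g': "B1 *\<^sub>v (R1 *\<^sub>v (B1 *\<^sub>v x)) = B1 *\<^sub>v x" if x: "x \<in> carrier_vec d" for x
  proof -
    have "B1 *\<^sub>v (R1 *\<^sub>v (B1 *\<^sub>v x)) = (B1 * R1 * B1) *\<^sub>v x" using assoc3_mv[OF B1 R1 B1 x] by simp
    thus ?thesis using R1g by simp
  qed
  define P where "P = 1\<^sub>m d - R1 * B1"
  have P: "P \<in> carrier_mat d d" unfolding P_def using R1 B1 by simp
  have B1P: "B1 *\<^sub>v (P *\<^sub>v z) = 0\<^sub>v p" if z: "z \<in> carrier_vec d" for z
  proof -
    have "P *\<^sub>v z = z - R1 *\<^sub>v (B1 *\<^sub>v z)" unfolding P_def using R1 B1 z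
      using minus_mult_distrib_mat_vec[of "1\<^sub>m d" d d "R1 * B1"] assoc2_mv[OF R1 B1] by simp
    hence "B1 *\<^sub>v (P *\<^sub>v z) = B1 *\<^sub>v z - B1 *\<^sub>v (R1 *\<^sub>v (B1 *\<^sub>v z))" using R1 B1 z
      by (simp add: mult_minus_distrib_mat_vec)
    thus ?thesis using R1g'[OF z] B1 z by simp
  qed
  obtain u where u: "u \<in> carrier_vec d" and B1u: "B1 *\<^sub>v u = 0\<^sub>v p"
    and bu: "b \<bullet> u = 1 \<or> (u = 0\<^sub>v d \<and> (\<forall>x\<in>carrier_vec d. b \<bullet> (R1 *\<^sub>v (B1 *\<^sub>v x)) = b \<bullet> x))"
  proof (cases "\<exists>z\<in>carrier_vec d. b \<bullet> (P *\<^sub>v z) \<noteq> 0")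
    case True
    then obtain z where z: "z \<in> carrier_vec d" and nz: "b \<bullet> (P *\<^sub>v z) \<noteq> 0" by auto
    define u where "u = (1 / (b \<bullet> (P *\<^sub>v z))) \<cdot>\<^sub>v (P *\<^sub>v z)"
    have "u = P *\<^sub>v ((1 / (b \<bullet> (P *\<^sub>v z))) \<cdot>\<^sub>v z)" unfolding u_def using P z
      by (simp add: mult_mat_vec)
    hence "B1 *\<^sub>v u = 0\<^sub>v p" using B1P z by simp
    moreover have "b \<bullet> u = 1" unfolding u_def using nz b P z by simp
    moreover have "u \<in> carrier_vec d" unfolding u_def using P z by simp
    ultimately show ?thesis using that by blast
  next
    case False
    have "\<forall>x\<in>carrier_vec d. b \<bullet> (R1 *\<^sub>v (B1 *\<^sub>v x)) = b \<bullet> x"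
    proof
      fix x :: "real vec" assume x: "x \<in> carrier_vec d"
      have "P *\<^sub>v x = x - R1 *\<^sub>v (B1 *\<^sub>v x)" unfolding P_def using R1 B1 x
        using minus_mult_distrib_mat_vec[of "1\<^sub>m d" d d "R1 * B1"] assoc2_mv[OF R1 B1] by simp
      hence "b \<bullet> (x - R1 *\<^sub>v (B1 *\<^sub>v x)) = 0" using False x by auto
      thus "b \<bullet> (R1 *\<^sub>v (B1 *\<^sub>v x)) = b \<bullet> x" using b x R1 B1
        by (simp add: scalar_prod_minus_distrib)
    qed
    moreover have "B1 *\<^sub>v 0\<^sub>v d = 0\<^sub>v p" using B1 by (intro eq_vecI) auto
    ultimately show ?thesis using that[of "0\<^sub>v d"] by auto
  qed
  define R where "R = mat d (Suc p) (\<lambda>(r,c). if c < p then R1 $$ (r,c) - (b \<bullet> col R1 c) * u $ r else u $ r)"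
  have R: "R \<in> carrier_mat d (Suc p)" unfolding R_def by simp
  have Ry: "R *\<^sub>v y = R1 *\<^sub>v vec p (\<lambda>i. y $ i) - (b \<bullet> (R1 *\<^sub>v vec p (\<lambda>i. y $ i))) \<cdot>\<^sub>v u + (y $ p) \<cdot>\<^sub>v u"
    if y: "y \<in> carrier_vec (Suc p)" for y
  proof -
    define y1 where "y1 = vec p (\<lambda>i. y $ i)"
    have e1: "b \<bullet> (R1 *\<^sub>v y1) = (\<Sum>c<p. (b \<bullet> col R1 c) * y $ c)"
    proof -
      have "b \<bullet> (R1 *\<^sub>v y1) = (\<Sum>i<d. b $ i * (\<Sum>c<p. R1 $$ (i,c) * y $ c))"
        using b R1 unfolding y1_def
        by (simp add: scalar_prod_def mult_mat_vec_def row_def atLeast0LessThan)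
      also have "\<dots> = (\<Sum>c<p. (\<Sum>i<d. b $ i * R1 $$ (i,c)) * y $ c)"
        by (simp add: sum_distrib_left sum_distrib_right mult.assoc sum.swap[of _ "{..<d}"])
      also have "\<dots> = (\<Sum>c<p. (b \<bullet> col R1 c) * y $ c)"
        using b R1 by (intro sum.cong refl) (simp add: scalar_prod_def col_def atLeast0LessThan)
      finally show ?thesis .
    qed
    have "R *\<^sub>v y = R1 *\<^sub>v y1 - (b \<bullet> (R1 *\<^sub>v y1)) \<cdot>\<^sub>v u + y $ p \<cdot>\<^sub>v u"
    proof (rule eq_vecI)
      show "dim_vec (R *\<^sub>v y) = dim_vec (R1 *\<^sub>v y1 - (b \<bullet> (R1 *\<^sub>v y1)) \<cdot>\<^sub>v u + y $ p \<cdot>\<^sub>v u)"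
        using R R1 u by simp
      fix r assume r: "r < dim_vec (R1 *\<^sub>v y1 - (b \<bullet> (R1 *\<^sub>v y1)) \<cdot>\<^sub>v u + y $ p \<cdot>\<^sub>v u)"
      hence r: "r < d" using u by simp
      have "(R *\<^sub>v y) $ r = (\<Sum>c<Suc p. R $$ (r,c) * y $ c)"
        using R r y by (simp add: scalar_prod_def mult_mat_vec_def row_def atLeast0LessThan)
      also have "\<dots> = (\<Sum>c<p. (R1 $$ (r,c) - (b \<bullet> col R1 c) * u $ r) * y $ c) + u $ r * y $ p"
        using r unfolding R_def by (simp add: sum.lessThan_Suc)
      also have "\<dots> = (\<Sum>c<p. R1 $$ (r,c) * y $ c) - u $ r * (\<Sum>c<p. (b \<bullet> col R1 c) * y $ c) + u $ r * y $ p"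
        by (simp add: algebra_simps sum_subtractf sum_distrib_left)
      also have "\<dots> = (R1 *\<^sub>v y1 - (b \<bullet> (R1 *\<^sub>v y1)) \<cdot>\<^sub>v u + y $ p \<cdot>\<^sub>v u) $ r"
        unfolding e1 using r R1 u
        by (simp add: y1_def scalar_prod_def mult_mat_vec_def row_def atLeast0LessThan)
      finally show "(R *\<^sub>v y) $ r = (R1 *\<^sub>v y1 - (b \<bullet> (R1 *\<^sub>v y1)) \<cdot>\<^sub>v u + y $ p \<cdot>\<^sub>v u) $ r" .
    qed
    thus ?thesis unfolding y1_def .
  qed
  have Bx: "B *\<^sub>v x = vec (Suc p) (\<lambda>i. if i < p then (B1 *\<^sub>v x) $ i else b \<bullet> x)"
    if x: "x \<in> carrier_vec d" for x
    using B x unfolding B1_def b_def by (intro eq_vecI) (auto simp: row_def less_Suc_eq scalar_prod_def)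
  show ?case
  proof (rule bexI[OF _ R], rule mat_eq_by_vec[of _ "Suc p" d])
    fix x :: "real vec" assume x: "x \<in> carrier_vec d"
    define y where "y = B *\<^sub>v x"
    have y: "y \<in> carrier_vec (Suc p)" unfolding y_def using B x by simp
    have y1: "vec p (\<lambda>i. y $ i) = B1 *\<^sub>v x" unfolding y_def Bx[OF x] using B1 by (intro eq_vecI) auto
    have y2: "y $ p = b \<bullet> x" unfolding y_def Bx[OF x] by simp
    have Ryx: "R *\<^sub>v y = R1 *\<^sub>v (B1 *\<^sub>v x) - (b \<bullet> (R1 *\<^sub>v (B1 *\<^sub>v x))) \<cdot>\<^sub>v u + (b \<bullet> x) \<cdot>\<^sub>v u"
      using Ry[OF y] y1 y2 by simp
    define w where "w = R *\<^sub>v y"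
    have w: "w \<in> carrier_vec d" unfolding w_def using R y by simp
    have "B * R * B *\<^sub>v x = B *\<^sub>v w" unfolding w_def y_def using assoc3_mv[OF B R B x] by simp
    also have "\<dots> = B *\<^sub>v x"
    proof -
      define s where "s = R1 *\<^sub>v (B1 *\<^sub>v x)"
      have s: "s \<in> carrier_vec d" unfolding s_def using R1 B1 x by simp
      have wd: "w = s - (b \<bullet> s) \<cdot>\<^sub>v u + (b \<bullet> x) \<cdot>\<^sub>v u" unfolding w_def Ryx s_def ..
      have B1w: "B1 *\<^sub>v w = B1 *\<^sub>v x"
      proof -
        have "B1 *\<^sub>v w = B1 *\<^sub>v s - (b \<bullet> s) \<cdot>\<^sub>v (B1 *\<^sub>v u) + (b \<bullet> x) \<cdot>\<^sub>v (B1 *\<^sub>v u)"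
          unfolding wd using B1 s u
          by (simp add: mult_add_distrib_mat_vec mult_minus_distrib_mat_vec mult_mat_vec)
        also have "\<dots> = B1 *\<^sub>v x" unfolding B1u s_def using R1g'[OF x] B1 x by (intro eq_vecI) auto
        finally show ?thesis .
      qed
      have bw: "b \<bullet> w = b \<bullet> x"
      proof -
        have "b \<bullet> w = b \<bullet> s - (b \<bullet> s) * (b \<bullet> u) + (b \<bullet> x) * (b \<bullet> u)"
          unfolding wd using b s u
          by (simp add: scalar_prod_add_distrib scalar_prod_minus_distrib)
        thus ?thesis using bu unfolding s_def using x b by auto
      qed
      show ?thesis unfolding Bx[OF w] Bx[OF x] B1w bw ..
    qed
    finally show "B * R * B *\<^sub>v x = B *\<^sub>v x" .
  qed (use B R in auto)
qed

declare minus_carrier_mat[simp]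

lemma mult_carrier_sq[simp]: "A \<in> carrier_mat n n \<Longrightarrow> B \<in> carrier_mat n n \<Longrightarrow> A * B \<in> carrier_mat n n"
  by simp

lemma zero_mat_mult_vec[simp]: "x \<in> carrier_vec c \<Longrightarrow> (0\<^sub>m r c :: 'a::comm_ring_1 mat) *\<^sub>v x = 0\<^sub>v r"
  by (intro eq_vecI) auto

lemma minus_zero_mat'[simp]: "X \<in> carrier_mat r c \<Longrightarrow> (X :: 'a::comm_ring_1 mat) - 0\<^sub>m r c = X"
  by (intro eq_matI) auto

lemma self_minus_mat[simp]: "X \<in> carrier_mat r c \<Longrightarrow> (X :: 'a::comm_ring_1 mat) - X = 0\<^sub>m r c"
  by (intro eq_matI) auto

lemma minus_plus_mat: "a \<in> carrier_mat r c \<Longrightarrow> b \<in> carrier_mat r c \<Longrightarrow> e \<in> carrier_mat r c \<Longrightarrow>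
   (a :: 'a::comm_ring_1 mat) - (b + e) = a - b - e"
  by (intro eq_matI) auto

lemma pow_mv_carrier[simp]: "X \<in> carrier_mat n n \<Longrightarrow> v \<in> carrier_vec n \<Longrightarrow> X ^\<^sub>m k *\<^sub>v v \<in> carrier_vec n"
  by (rule mult_mat_vec_carrier[OF pow_carrier_mat])

lemma uv_pow:
  fixes U V :: "'a::comm_ring_1 mat"
  assumes U: "U \<in> carrier_mat n n" and V: "V \<in> carrier_mat n n"
  shows "(U * V) ^\<^sub>m Suc q = U * (V * U) ^\<^sub>m q * V"
proof (induction q)
  case 0
  show ?case using U V by simp
next
  case (Suc q)
  have "(U * V) ^\<^sub>m Suc (Suc q) = (U * V) ^\<^sub>m Suc q * (U * V)" by simp
  also have "\<dots> = U * (V * U) ^\<^sub>m q * V * (U * V)" using Suc by simp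
  also have "\<dots> = U * ((V * U) ^\<^sub>m q * (V * U)) * V"
    using U V by (simp add: assoc_mult_mat[of _ n n _ n _ n])
  also have "\<dots> = U * (V * U) ^\<^sub>m Suc q * V" by simp
  finally show ?case .
qed

lemma proj_pow:
  fixes Q N :: "'a::comm_ring_1 mat"
  assumes Q: "Q \<in> carrier_mat n n" and N: "N \<in> carrier_mat n n" and QN: "Q * N = N"
  shows "N ^\<^sub>m Suc j * Q = (N * Q) ^\<^sub>m Suc j"
proof (induction j)
  case 0
  show ?case using Q N by simp
next
  case (Suc j)
  have "N ^\<^sub>m Suc (Suc j) * Q = N ^\<^sub>m Suc j * (Q * N) * Q"
    using QN by simp
  also have "\<dots> = N ^\<^sub>m Suc j * Q * (N * Q)"
    using Q N by (simp add: assoc_mult_mat[of _ n n _ n _ n])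
  also have "\<dots> = (N * Q) ^\<^sub>m Suc (Suc j)" using Suc by simp
  finally show ?case .
qed

lemma pow_Suc_left:
  fixes X :: "'a::comm_ring_1 mat"
  assumes X: "X \<in> carrier_mat n n"
  shows "X ^\<^sub>m Suc k = X * X ^\<^sub>m k"
proof (induction k)
  case 0 show ?case using X by simp
next
  case (Suc k)
  have "X ^\<^sub>m Suc (Suc k) = X * X ^\<^sub>m k * X" using Suc by simp
  also have "\<dots> = X * X ^\<^sub>m Suc k" using X by (simp add: assoc_mult_mat[of _ n n _ n _ n])
  finally show ?case .
qed

lemma rel_deadbeat:
  fixes A :: "real mat"
  assumes A: "A \<in> carrier_mat d d"
  shows "Q \<in> carrier_mat d d \<Longrightarrow> Q * Q = Q \<Longrightarrow> C \<in> carrier_mat p d \<Longrightarrow>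
   (\<forall>v\<in>carrier_vec d. Q *\<^sub>v v = v \<and> (\<forall>k<m. C *\<^sub>v ((Q * A) ^\<^sub>m k *\<^sub>v v) = 0\<^sub>v p) \<longrightarrow> v = 0\<^sub>v d) \<Longrightarrow>
   \<exists>G\<in>carrier_mat d p. \<exists>q. Q * G = G \<and> (Q * A - G * C) ^\<^sub>m q * Q = 0\<^sub>m d d"
proof (induction m arbitrary: p Q C)
  case 0
  note Q = "0.prems"(1) and QQ = "0.prems"(2) and C = "0.prems"(3) and obs = "0.prems"(4)
  have Q0: "Q = 0\<^sub>m d d"
  proof (rule mat_eq_by_vec[OF Q])
    fix x :: "real vec" assume x: "x \<in> carrier_vec d"
    have "Q *\<^sub>v (Q *\<^sub>v x) = Q *\<^sub>v x" using assoc2_mv[OF Q Q x] QQ by simp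
    hence "Q *\<^sub>v x = 0\<^sub>v d" using obs Q x by simp
    thus "Q *\<^sub>v x = 0\<^sub>m d d *\<^sub>v x" using x by simp
  qed simp
  show ?case
  proof (intro bexI[of _ "0\<^sub>m d p"] exI[of _ 0] conjI)
    show "Q * 0\<^sub>m d p = 0\<^sub>m d p" using Q by (simp add: right_mult_zero_mat)
    show "(Q * A - 0\<^sub>m d p * C) ^\<^sub>m 0 * Q = 0\<^sub>m d d" using Q Q0 A by simp
  qed simp
next
  case (Suc m)
  note Q = Suc.prems(1) and QQ = Suc.prems(2) and C = Suc.prems(3) and obs = Suc.prems(4)
  have CQ: "C * Q \<in> carrier_mat p d" using C Q by simp
  obtain R0 where R0: "R0 \<in> carrier_mat d p" and g: "C * Q * R0 * (C * Q) = C * Q"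
    using ginv_exists[OF CQ] by auto
  define R where "R = Q * R0"
  have R: "R \<in> carrier_mat d p" unfolding R_def using Q R0 by simp
  have QR: "Q * R = R" unfolding R_def using Q R0 QQ
    by (metis assoc_mult_mat)
  have CRCQ: "C * R * (C * Q) = C * Q" unfolding R_def using g C Q R0
    by (metis assoc_mult_mat mult_carrier_mat)
  define Q' where "Q' = Q - R * (C * Q)"
  have Q': "Q' \<in> carrier_mat d d" unfolding Q'_def using Q R C by simp
  have QQ': "Q * Q' = Q'"
  proof -
    have "Q * Q' = Q * Q - Q * (R * (C * Q))" unfolding Q'_def
      by (rule mult_minus_distrib_mat[OF Q Q]) (use R C Q in simp)
    also have "Q * (R * (C * Q)) = (Q * R) * (C * Q)" using Q R CQ by simp
    finally show ?thesis unfolding QR QQ Q'_def .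
  qed
  have CQ': "C * Q' = 0\<^sub>m p d"
  proof -
    have "C * Q' = C * Q - C * (R * (C * Q))" unfolding Q'_def
      by (rule mult_minus_distrib_mat[OF C Q]) (use R C Q in simp)
    also have "C * (R * (C * Q)) = C * Q" using CRCQ C R CQ by simp
    finally show ?thesis using CQ by simp
  qed
  have Q'Q': "Q' * Q' = Q'"
  proof -
    have "(Q - R * (C * Q)) * Q' = Q * Q' - R * (C * Q) * Q'"
      by (rule minus_mult_distrib_mat[OF Q _ Q']) (use R C Q in simp_all)
    hence "Q' * Q' = Q * Q' - R * (C * Q) * Q'" unfolding Q'_def[symmetric] .
    also have "R * (C * Q) * Q' = R * (C * (Q * Q'))" using assoc_mult_mat[OF R CQ Q'] assoc_mult_mat[OF C Q Q'] by simp
    also have "\<dots> = 0\<^sub>m d d" unfolding QQ' CQ' using R by simp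
    finally show ?thesis unfolding QQ' using Q' by simp
  qed
  define D where "D = C * Q * A"
  have D: "D \<in> carrier_mat p d" unfolding D_def using C Q A by simp
  have obs': "\<forall>v\<in>carrier_vec d. Q' *\<^sub>v v = v \<and> (\<forall>k<m. D *\<^sub>v ((Q' * A) ^\<^sub>m k *\<^sub>v v) = 0\<^sub>v p) \<longrightarrow> v = 0\<^sub>v d"
  proof (intro ballI impI)
    fix v :: "real vec" assume v: "v \<in> carrier_vec d"
      and h: "Q' *\<^sub>v v = v \<and> (\<forall>k<m. D *\<^sub>v ((Q' * A) ^\<^sub>m k *\<^sub>v v) = 0\<^sub>v p)"
    have Q'v: "Q' *\<^sub>v v = v" using h by simp
    have hk: "\<And>k. k < m \<Longrightarrow> D *\<^sub>v ((Q' * A) ^\<^sub>m k *\<^sub>v v) = 0\<^sub>v p" using h by simp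
    have Qv: "Q *\<^sub>v v = v"
      using assoc2_mv[OF Q Q' v] QQ' Q'v by simp
    have Cv: "C *\<^sub>v v = 0\<^sub>v p"
      using assoc2_mv[OF C Q' v] CQ' Q'v v by simp
    have Q'A: "Q' * A \<in> carrier_mat d d" using Q' A by simp
    have QA: "Q * A \<in> carrier_mat d d" using Q A by simp
    have powS: "X ^\<^sub>m Suc k *\<^sub>v v = X *\<^sub>v (X ^\<^sub>m k *\<^sub>v v)" if X: "X \<in> carrier_mat d d" for X :: "real mat" and k
      using pow_Suc_left[OF X, of k] assoc2_mv[OF X _ v, of "X ^\<^sub>m k"] X by simp
    have step: "(Q' * A) *\<^sub>v w = (Q * A) *\<^sub>v w" if w: "w \<in> carrier_vec d" and Dw: "D *\<^sub>v w = 0\<^sub>v p" for w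
    proof -
      have Aw: "A *\<^sub>v w \<in> carrier_vec d" using A w by simp
      have RCQ: "R * (C * Q) \<in> carrier_mat d d" using R C Q by simp
      have "(Q' * A) *\<^sub>v w = Q' *\<^sub>v (A *\<^sub>v w)" by (rule assoc2_mv[OF Q' A w])
      also have "\<dots> = Q *\<^sub>v (A *\<^sub>v w) - (R * (C * Q)) *\<^sub>v (A *\<^sub>v w)"
        unfolding Q'_def by (rule minus_mult_distrib_mat_vec[OF Q RCQ Aw])
      also have "(R * (C * Q)) *\<^sub>v (A *\<^sub>v w) = R *\<^sub>v (D *\<^sub>v w)"
        unfolding D_def using assoc2_mv[OF R CQ Aw] assoc3_mv[OF C Q A w] assoc2_mv[OF C Q Aw] by simp
      also have "\<dots> = 0\<^sub>v d" unfolding Dw using R by (intro eq_vecI) auto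
      also have "Q *\<^sub>v (A *\<^sub>v w) = (Q * A) *\<^sub>v w" using assoc2_mv[OF Q A w] by simp
      finally show ?thesis using QA w by (intro eq_vecI) auto
    qed
    have pw: "k \<le> m \<longrightarrow> (Q' * A) ^\<^sub>m k *\<^sub>v v = (Q * A) ^\<^sub>m k *\<^sub>v v" for k
    proof (induction k)
      case 0 show ?case using Q' Q A v by simp
    next
      case (Suc k)
      show ?case
      proof
        assume k: "Suc k \<le> m"
        have w: "(Q' * A) ^\<^sub>m k *\<^sub>v v \<in> carrier_vec d" using pow_mv_carrier[OF Q'A v] .
        have "(Q' * A) ^\<^sub>m Suc k *\<^sub>v v = (Q' * A) *\<^sub>v ((Q' * A) ^\<^sub>m k *\<^sub>v v)" by (rule powS[OF Q'A])
        also have "\<dots> = (Q * A) *\<^sub>v ((Q' * A) ^\<^sub>m k *\<^sub>v v)" by (rule step[OF w hk]) (use k in simp)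
        also have "\<dots> = (Q * A) *\<^sub>v ((Q * A) ^\<^sub>m k *\<^sub>v v)" using Suc.IH k by simp
        also have "\<dots> = (Q * A) ^\<^sub>m Suc k *\<^sub>v v" by (rule powS[OF QA, symmetric])
        finally show "(Q' * A) ^\<^sub>m Suc k *\<^sub>v v = (Q * A) ^\<^sub>m Suc k *\<^sub>v v" .
      qed
    qed
    have "\<forall>k<Suc m. C *\<^sub>v ((Q * A) ^\<^sub>m k *\<^sub>v v) = 0\<^sub>v p"
    proof (intro allI impI)
      fix k assume k: "k < Suc m"
      show "C *\<^sub>v ((Q * A) ^\<^sub>m k *\<^sub>v v) = 0\<^sub>v p"
      proof (cases k)
        case 0 then show ?thesis using Cv Q A v by simp
      next
        case (Suc k')
        have y: "(Q' * A) ^\<^sub>m k' *\<^sub>v v \<in> carrier_vec d" using pow_mv_carrier[OF Q'A v] .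
        have "(Q * A) ^\<^sub>m k *\<^sub>v v = (Q * A) *\<^sub>v ((Q' * A) ^\<^sub>m k' *\<^sub>v v)"
          unfolding Suc powS[OF QA] using pw[of k'] k Suc by simp
        hence "C *\<^sub>v ((Q * A) ^\<^sub>m k *\<^sub>v v) = D *\<^sub>v ((Q' * A) ^\<^sub>m k' *\<^sub>v v)"
          unfolding D_def using assoc3_mv[OF C Q A y] assoc2_mv[OF Q A y] by simp
        also have "\<dots> = 0\<^sub>v p" using hk k Suc by simp
        finally show ?thesis .
      qed
    qed
    thus "v = 0\<^sub>v d" using obs v Qv by blast
  qed
  obtain G' q where G': "G' \<in> carrier_mat d p" and Q'G': "Q' * G' = G'"
    and nil': "(Q' * A - G' * D) ^\<^sub>m q * Q' = 0\<^sub>m d d"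
    using Suc.IH[OF Q' Q'Q' D obs'] by auto
  define W where "W = R + G'"
  define G where "G = Q * A * W"
  have W: "W \<in> carrier_mat d p" unfolding W_def using R G' by simp
  have G: "G \<in> carrier_mat d p" unfolding G_def using Q A W by simp
  have QA: "Q * A \<in> carrier_mat d d" using Q A by simp
  have QQA: "Q * (Q * A) = Q * A" using assoc_mult_mat[OF Q Q A] QQ by simp
  have QG: "Q * G = G" unfolding G_def using assoc_mult_mat[OF Q QA W] QQA by simp
  define N where "N = Q * A - G * C"
  have N: "N \<in> carrier_mat d d" unfolding N_def using Q A G C by simp
  have QN: "Q * N = N"
  proof -
    have GC: "G * C \<in> carrier_mat d d" using G C by simp
    have "Q * N = Q * (Q * A) - Q * (G * C)" unfolding N_def
      by (rule mult_minus_distrib_mat[OF Q QA GC])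
    also have "Q * (Q * A) = Q * A" by (rule QQA)
    also have "Q * (G * C) = G * C" using assoc_mult_mat[OF Q G C] QG by simp
    finally show ?thesis unfolding N_def .
  qed
  define U where "U = Q * A"
  define V where "V = Q - W * C * Q"
  define N' where "N' = Q' * A - G' * D"
  have U: "U \<in> carrier_mat d d" unfolding U_def using Q A by simp
  have V: "V \<in> carrier_mat d d" unfolding V_def using Q W C by simp
  have N': "N' \<in> carrier_mat d d" unfolding N'_def using Q' A G' D by simp
  have CQ2: "C * Q \<in> carrier_mat p d" using C Q by simp
  have WCQ: "W * C * Q \<in> carrier_mat d d" using W C Q by simp
  have GC: "G * C \<in> carrier_mat d d" using G C by simp
  have NQ: "N * Q = U * V"
  proof -
    have "N * Q = Q * A * Q - G * C * Q" unfolding N_def by (rule minus_mult_distrib_mat[OF QA GC Q])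
    also have "G * C * Q = Q * A * (W * C * Q)"
      unfolding G_def using assoc_mult_mat[OF G C Q, unfolded G_def] assoc_mult_mat[OF QA W CQ2]
        assoc_mult_mat[OF W C Q] by simp
    also have "Q * A * Q - Q * A * (W * C * Q) = U * V" unfolding U_def V_def
      by (rule mult_minus_distrib_mat[OF QA Q WCQ, symmetric])
    finally show ?thesis .
  qed
  have VU: "V * U = N'"
  proof -
    have CQA: "C * (Q * A) \<in> carrier_mat p d" using C QA by simp
    have "V * U = Q * (Q * A) - W * C * Q * (Q * A)" unfolding V_def U_def
      by (rule minus_mult_distrib_mat[OF Q WCQ QA])
    also have "W * C * Q * (Q * A) = W * (C * (Q * A))"
      using assoc_mult_mat[OF WCQ Q A] assoc_mult_mat[OF W C Q] assoc_mult_mat[OF W C QA] QQA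
        assoc_mult_mat[OF W CQ2 QA] assoc_mult_mat[OF C Q QA] by simp
    also have "\<dots> = R * (C * (Q * A)) + G' * (C * (Q * A))" unfolding W_def
      by (rule add_mult_distrib_mat[OF R G' CQA])
    finally have 1: "V * U = Q * A - (R * (C * (Q * A)) + G' * (C * (Q * A)))" unfolding QQA .
    have "N' = Q * A - R * (C * Q) * A - G' * (C * (Q * A))" unfolding N'_def Q'_def D_def
      using minus_mult_distrib_mat[OF Q _ A, of "R * (C * Q)"] R CQ2 assoc_mult_mat[OF C Q A] by simp
    also have "R * (C * Q) * A = R * (C * (Q * A))"
      using assoc_mult_mat[OF R CQ2 A] assoc_mult_mat[OF C Q A] by simp
    finally show ?thesis unfolding 1
      by (rule sym[OF trans[OF _ minus_plus_mat[symmetric]]]) (use QA R CQA G' in \<open>auto intro: mult_carrier_mat\<close>)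
  qed
  have N'V: "N' ^\<^sub>m q * V = 0\<^sub>m d d"
  proof -
    have GCQ: "G' * (C * Q) \<in> carrier_mat d d" using G' CQ2 by simp
    have RCQ: "R * (C * Q) \<in> carrier_mat d d" using R CQ2 by simp
    have Vd: "V = Q' - G' * (C * Q)"
    proof -
      have "W * C * Q = W * (C * Q)" by (rule assoc_mult_mat[OF W C Q])
      also have "\<dots> = R * (C * Q) + G' * (C * Q)" unfolding W_def by (rule add_mult_distrib_mat[OF R G' CQ2])
      finally show ?thesis unfolding V_def Q'_def using minus_plus_mat[OF Q RCQ GCQ] by simp
    qed
    have Pq: "N' ^\<^sub>m q \<in> carrier_mat d d" using N' by simp
    have "N' ^\<^sub>m q * V = N' ^\<^sub>m q * Q' - N' ^\<^sub>m q * (G' * (C * Q))" unfolding Vd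
      by (rule mult_minus_distrib_mat[OF Pq Q' GCQ])
    also have "N' ^\<^sub>m q * (G' * (C * Q)) = N' ^\<^sub>m q * Q' * G' * (C * Q)"
      using assoc_mult_mat[OF Pq G' CQ2] assoc_mult_mat[OF Pq Q' G'] Q'G' by simp
    also have "\<dots> = 0\<^sub>m d d" unfolding N'_def[symmetric] nil'[unfolded N'_def[symmetric]] using G' CQ2
      by (simp add: left_mult_zero_mat)
    finally show ?thesis unfolding N'_def[symmetric] nil'[unfolded N'_def[symmetric]] by simp
  qed
  have "N ^\<^sub>m Suc q * Q = (N * Q) ^\<^sub>m Suc q" by (rule proj_pow[OF Q N QN])
  also have "\<dots> = U * (V * U) ^\<^sub>m q * V" unfolding NQ by (rule uv_pow[OF U V])
  also have "\<dots> = U * ((V * U) ^\<^sub>m q * V)" by (rule assoc_mult_mat[OF U _ V]) (use U V in simp)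
  also have "\<dots> = 0\<^sub>m d d" unfolding VU N'V using U by simp
  finally have "N ^\<^sub>m Suc q * Q = 0\<^sub>m d d" .
  thus ?case using G QG unfolding N_def by blast
qed

locale netrun =
  fixes N :: nat and nd pd :: "nat \<Rightarrow> nat" and Ab Cb :: "nat \<Rightarrow> nat \<Rightarrow> real mat"
    and L :: "nat \<Rightarrow> real mat" and E :: "nat \<Rightarrow> (nat \<times> nat) set"
    and z :: "nat \<Rightarrow> nat \<Rightarrow> real vec" and tau :: "nat \<Rightarrow> nat \<Rightarrow> nat \<Rightarrow> nat option"
    and zh :: "nat \<Rightarrow> nat \<Rightarrow> nat \<Rightarrow> real vec"
  assumes run: "fi_run N nd pd Ab Cb L E z tau zh"
begin

lemma tau_src: "j < N \<Longrightarrow> tau k j j = Some 0"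
  using run unfolding fi_run_def by (cases k) auto

lemma tau_init: "i < N \<Longrightarrow> j < N \<Longrightarrow> i \<noteq> j \<Longrightarrow> tau 0 i j = None"
  using run unfolding fi_run_def by auto

lemma nbrs_lt: "l \<in> nbrs N E k i \<Longrightarrow> l < N"
  unfolding nbrs_def by auto

lemma step:
  assumes i: "i < N" and j: "j < N" and ij: "i \<noteq> j"
  shows "(\<exists>u<N. zh (Suc k) i j = Ab j j *\<^sub>v zh k u j + vsum (nd j) (\<lambda>q. Ab j q *\<^sub>v zh k i q) j)
    \<and> (\<forall>t'. tau (Suc k) i j = Some t' \<longrightarrow> 1 \<le> t' \<and> (\<exists>u<N. tau k u j = Some (t' - 1) \<and>
          zh (Suc k) i j = Ab j j *\<^sub>v zh k u j + vsum (nd j) (\<lambda>q. Ab j q *\<^sub>v zh k i q) j))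
    \<and> (\<forall>t. tau k i j = Some t \<longrightarrow> (\<exists>t'. tau (Suc k) i j = Some t' \<and> t' \<le> Suc t))
    \<and> (\<forall>l s. l \<in> nbrs N E k i \<longrightarrow> tau k l j = Some s \<longrightarrow> (\<exists>t'. tau (Suc k) i j = Some t' \<and> t' \<le> Suc s))"
proof -
  define M where "M = {l \<in> nbrs N E k i. tau k l j \<noteq> None}"
  define adopt where "adopt = (\<lambda>u. Ab j j *\<^sub>v zh k u j + vsum (nd j) (\<lambda>q. Ab j q *\<^sub>v zh k i q) j)"
  have H: "case tau k i j of
              None \<Rightarrow>
                (if M \<noteq> {} then
                   (\<exists>u\<in>M. (\<forall>l\<in>M. the (tau k u j) \<le> the (tau k l j)) \<and>
                          tau (Suc k) i j = Some (the (tau k u j) + 1) \<and>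
                          zh (Suc k) i j = adopt u)
                 else tau (Suc k) i j = None \<and> zh (Suc k) i j = adopt i)
            | Some t \<Rightarrow>
                (if {l \<in> M. the (tau k l j) < t} \<noteq> {} then
                   (\<exists>u\<in>{l \<in> M. the (tau k l j) < t}. (\<forall>l\<in>{l \<in> M. the (tau k l j) < t}. the (tau k u j) \<le> the (tau k l j)) \<and>
                          tau (Suc k) i j = Some (the (tau k u j) + 1) \<and>
                          zh (Suc k) i j = adopt u)
                 else tau (Suc k) i j = Some (t + 1) \<and> zh (Suc k) i j = adopt i)"
    using run i j ij unfolding fi_run_def M_def adopt_def Let_def by auto
  have Mlt: "\<And>u. u \<in> M \<Longrightarrow> u < N" unfolding M_def using nbrs_lt by auto
  show ?thesis
  proof (cases "tau k i j")
    case None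
    show ?thesis
    proof (cases "M = {}")
      case True
      have "tau (Suc k) i j = None \<and> zh (Suc k) i j = adopt i" using H None True by simp
      moreover have "\<forall>l s. l \<in> nbrs N E k i \<longrightarrow> tau k l j \<noteq> Some s" using True unfolding M_def by auto
      ultimately show ?thesis using None i unfolding adopt_def by auto
    next
      case False
      then obtain u where u: "u \<in> M" and mn: "\<forall>l\<in>M. the (tau k u j) \<le> the (tau k l j)"
        and tu: "tau (Suc k) i j = Some (the (tau k u j) + 1)" and zu: "zh (Suc k) i j = adopt u"
        using H None by auto
      obtain su where su: "tau k u j = Some su" using u unfolding M_def by auto
      have S4: "\<forall>l s. l \<in> nbrs N E k i \<longrightarrow> tau k l j = Some s \<longrightarrow> (\<exists>t'. tau (Suc k) i j = Some t' \<and> t' \<le> Suc s)"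
      proof (intro allI impI)
        fix l s assume l: "l \<in> nbrs N E k i" and s: "tau k l j = Some s"
        hence "l \<in> M" unfolding M_def by auto
        hence "su \<le> s" using mn su s by force
        thus "\<exists>t'. tau (Suc k) i j = Some t' \<and> t' \<le> Suc s" using tu su by auto
      qed
      show ?thesis using S4 tu zu su Mlt[OF u] None unfolding adopt_def by auto
    qed
  next
    case (Some t)
    define F where "F = {l \<in> M. the (tau k l j) < t}"
    show ?thesis
    proof (cases "F = {}")
      case True
      have tz: "tau (Suc k) i j = Some (t + 1) \<and> zh (Suc k) i j = adopt i" using H Some True unfolding F_def by simp
      have S4: "\<forall>l s. l \<in> nbrs N E k i \<longrightarrow> tau k l j = Some s \<longrightarrow> (\<exists>t'. tau (Suc k) i j = Some t' \<and> t' \<le> Suc s)"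
      proof (intro allI impI)
        fix l s assume l: "l \<in> nbrs N E k i" and s: "tau k l j = Some s"
        hence "l \<in> M" unfolding M_def by auto
        hence "\<not> s < t" using True s unfolding F_def by auto
        thus "\<exists>t'. tau (Suc k) i j = Some t' \<and> t' \<le> Suc s" using tz by auto
      qed
      show ?thesis using S4 tz Some i unfolding adopt_def by auto
    next
      case False
      then obtain u where u: "u \<in> F" and mn: "\<forall>l\<in>F. the (tau k u j) \<le> the (tau k l j)"
        and tu: "tau (Suc k) i j = Some (the (tau k u j) + 1)" and zu: "zh (Suc k) i j = adopt u"
        using H Some unfolding F_def by auto
      obtain su where su: "tau k u j = Some su" and sut: "su < t" using u unfolding M_def F_def by auto
      have uM: "u \<in> M" using u unfolding F_def by auto
      have S4: "\<forall>l s. l \<in> nbrs N E k i \<longrightarrow> tau k l j = Some s \<longrightarrow> (\<exists>t'. tau (Suc k) i j = Some t' \<and> t' \<le> Suc s)"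
      proof (intro allI impI)
        fix l s assume l: "l \<in> nbrs N E k i" and s: "tau k l j = Some s"
        hence lM: "l \<in> M" unfolding M_def by auto
        have "su \<le> s"
        proof (cases "s < t")
          case True
          hence "l \<in> F" using lM s unfolding F_def by auto
          thus ?thesis using mn su s by force
        next
          case False thus ?thesis using sut by auto
        qed
        thus "\<exists>t'. tau (Suc k) i j = Some t' \<and> t' \<le> Suc s" using tu su by auto
      qed
      show ?thesis using S4 tu zu su sut Mlt[OF uM] Some unfolding adopt_def by auto
    qed
  qed
qed

definition P :: "nat \<Rightarrow> nat \<Rightarrow> nat \<Rightarrow> nat \<Rightarrow> bool" where
  "P j m k i \<longleftrightarrow> (\<exists>t. tau k i j = Some t \<and> t + m \<le> k)"

lemma P_mono: assumes j: "j < N" and i: "i < N" and p: "P j m k i" shows "P j m (Suc k) i"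
proof (cases "i = j")
  case True
  then show ?thesis using p tau_src[OF j] unfolding P_def by auto
next
  case False
  obtain t where t: "tau k i j = Some t" "t + m \<le> k" using p unfolding P_def by auto
  then obtain t' where "tau (Suc k) i j = Some t'" "t' \<le> Suc t" using step[OF i j False, of k] by blast
  then show ?thesis using t unfolding P_def by auto
qed

lemma P_mono_le: assumes j: "j < N" and i: "i < N" and p: "P j m k i" and kk: "k \<le> k'" shows "P j m k' i"
  using kk
proof (induction k' rule: dec_induct)
  case base then show ?case using p .
next
  case (step n) then show ?case using P_mono[OF j i] by blast
qed

lemma P_edge: assumes j: "j < N" and i: "i < N" and l: "l \<in> nbrs N E k i" and p: "P j m k l"
  shows "P j m (Suc k) i"
proof (cases "i = j")
  case True
  then show ?thesis using p tau_src[OF j] unfolding P_def by auto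
next
  case False
  obtain t where t: "tau k l j = Some t" "t + m \<le> k" using p unfolding P_def by auto
  then obtain t' where "tau (Suc k) i j = Some t'" "t' \<le> Suc t" using step[OF i j False, of k] l by blast
  then show ?thesis using t unfolding P_def by auto
qed

lemma P_src: "j < N \<Longrightarrow> m \<le> k \<Longrightarrow> P j m k j"
  using tau_src unfolding P_def by auto

end

lemma rtrancl_cross:
  assumes "(x, y) \<in> Rel\<^sup>*" and "x \<in> S" and "y \<notin> S"
  shows "\<exists>a c. (a, c) \<in> Rel \<and> a \<in> S \<and> c \<notin> S"
  using assms
proof (induction rule: rtrancl_induct)
  case base then show ?case by simp
next
  case (step y' y)
  show ?case
  proof (cases "y' \<in> S")
    case True then show ?thesis using step by blast
  next
    case False then show ?thesis using step by blast
  qed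
qed

context netrun begin

lemma spread:
  assumes conn: "joint_strong_conn N E T" and j: "j < N"
  shows "min N (Suc r) \<le> card {i. i < N \<and> P j (w*T) (w*T + r*T) i}"
proof (induction r)
  case 0
  have "j \<in> {i. i < N \<and> P j (w*T) (w*T + 0*T) i}" using P_src[OF j] j by simp
  moreover have "finite {i. i < N \<and> P j (w*T) (w*T + 0*T) i}" by simp
  ultimately have "0 < card {i. i < N \<and> P j (w*T) (w*T + 0*T) i}" by (auto simp: card_gt_0_iff)
  then show ?case by simp
next
  case (Suc r)
  define S where "S = {i. i < N \<and> P j (w*T) (w*T + r*T) i}"
  define S' where "S' = {i. i < N \<and> P j (w*T) (w*T + Suc r*T) i}"
  have finS': "finite S'" unfolding S'_def by simp
  have SS': "S \<subseteq> S'" unfolding S_def S'_def using P_mono_le[OF j] by auto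
  show ?case
  proof (cases "N \<le> card S")
    case True
    then show ?thesis using card_mono[OF finS' SS'] unfolding S'_def by simp
  next
    case False
    have "\<not> {..<N} \<subseteq> S"
    proof
      assume "{..<N} \<subseteq> S"
      hence "card {..<N} \<le> card S" by (rule card_mono[rotated]) (simp add: S_def)
      thus False using False by simp
    qed
    then obtain b where b: "b < N" "b \<notin> S" by auto
    have jS: "j \<in> S" unfolding S_def using P_src[OF j] j by simp
    have T1: "T \<ge> 1" and usc: "union_strongly_connected N E {(w + r) * T ..< (w + r + 1) * T}"
      using conn unfolding joint_strong_conn_def by auto
    have "(j, b) \<in> ((\<Union>k\<in>{(w + r) * T ..< (w + r + 1) * T}. E k) \<inter> ({..<N} \<times> {..<N}))\<^sup>*"
      using usc j b unfolding union_strongly_connected_def by auto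
    then obtain a c where ac: "(a, c) \<in> (\<Union>k\<in>{(w + r) * T ..< (w + r + 1) * T}. E k) \<inter> ({..<N} \<times> {..<N})"
      and aS: "a \<in> S" and cS: "c \<notin> S"
      using rtrancl_cross[OF _ jS b(2)] by blast
    then obtain k' where k': "k' \<in> {(w + r) * T ..< (w + r + 1) * T}" and e: "(a, c) \<in> E k'"
      and a: "a < N" and c: "c < N" by auto
    have "a \<noteq> c" using aS cS by auto
    hence anb: "a \<in> nbrs N E k' c" unfolding nbrs_def using a e by auto
    have Pa: "P j (w*T) (w*T + r*T) a" using aS unfolding S_def by auto
    have "w*T + r*T \<le> k'" using k' by (simp add: algebra_simps)
    hence "P j (w*T) k' a" using P_mono_le[OF j a Pa] by simp
    hence "P j (w*T) (Suc k') c" using P_edge[OF j c anb] by simp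
    moreover have "Suc k' \<le> w*T + Suc r * T" using k' by (simp add: algebra_simps)
    ultimately have "P j (w*T) (w*T + Suc r*T) c" using P_mono_le[OF j c] by blast
    hence "c \<in> S'" unfolding S'_def using c by simp
    hence "insert c S \<subseteq> S'" using SS' by auto
    hence "card (insert c S) \<le> card S'" using card_mono[OF finS'] by blast
    moreover have "card (insert c S) = Suc (card S)" using cS by (simp add: S_def)
    ultimately have "Suc (card S) \<le> card S'" by simp
    moreover have "min N (Suc r) \<le> card S" using Suc.IH unfolding S_def .
    ultimately show ?thesis unfolding S'_def[symmetric] by linarith
  qed
qed

lemma all_informed:
  assumes conn: "joint_strong_conn N E T" and j: "j < N" and i: "i < N"
  shows "P j (w*T) (w*T + (N - 1)*T) i"
proof -
  define S where "S = {i. i < N \<and> P j (w*T) (w*T + (N - 1)*T) i}"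
  have c: "min N (Suc (N - 1)) \<le> card S" unfolding S_def by (rule spread[OF conn j])
  have "Suc (N - 1) = N" using j by simp
  hence c2: "N \<le> card S" using c by simp
  have sub: "S \<subseteq> {..<N}" unfolding S_def by auto
  have "card S \<le> card {..<N}" by (rule card_mono[OF _ sub]) simp
  hence "card S = card {..<N}" using c2 by simp
  hence "S = {..<N}" by (rule card_subset_eq[OF _ sub, rotated]) simp
  thus ?thesis using i unfolding S_def by auto
qed

lemma tau_bound:
  assumes conn: "joint_strong_conn N E T" and j: "j < N" and i: "i < N" and k: "(N - 1) * T \<le> k"
  shows "\<exists>t. tau k i j = Some t \<and> t < N * T"
proof -
  have T1: "T \<ge> 1" using conn unfolding joint_strong_conn_def by auto
  define w where "w = k div T - (N - 1)"
  have "(N - 1) * T div T \<le> k div T" using div_le_mono[OF k] .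
  hence "N - 1 \<le> k div T" using T1 by simp
  hence wk0: "w + (N - 1) = k div T" unfolding w_def by simp
  have wk: "w * T + (N - 1) * T = (k div T) * T" unfolding wk0[symmetric] by (simp add: add_mult_distrib)
  have le: "w * T + (N - 1) * T \<le> k" unfolding wk by simp
  have lt: "k < w * T + N * T"
  proof -
    have "k mod T < T" using T1 by simp
    moreover have "k = (k div T) * T + k mod T" by simp
    ultimately have "k < (k div T) * T + T" by linarith
    also have "(k div T) * T + T = w * T + N * T"
    proof -
      have "N * T = (N - 1) * T + T" using j by (cases N) auto
      thus ?thesis using wk by simp
    qed
    finally show ?thesis .
  qed
  have "P j (w*T) k i" using P_mono_le[OF j i all_informed[OF conn j i, of w] le] .
  then obtain t where "tau k i j = Some t" "t + w * T \<le> k" unfolding P_def by auto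
  thus ?thesis using lt by auto
qed

end

declare minus_carrier_mat[simp]

lemma foldr_vsum: "foldr (\<lambda>q acc. f q + acc) xs (0\<^sub>v d) = vec d (\<lambda>i. sum_list (map (\<lambda>q. f q $ i) xs))"
  by (induction xs) (auto intro!: eq_vecI)

lemma vsum_index: "vsum d f m = vec d (\<lambda>i. \<Sum>q<m. f q $ i)"
  unfolding vsum_def foldr_vsum
  by (simp add: sum_set_upt_conv_sum_list_nat[symmetric] atLeast0LessThan)

lemma vsum_carrier[simp]: "vsum d f m \<in> carrier_vec d"
  unfolding vsum_index by simp

lemma vsum_dim[simp]: "dim_vec (vsum d f m) = d"
  unfolding vsum_index by simp

lemma vsum_nth: "i < d \<Longrightarrow> vsum d f m $ i = (\<Sum>q<m. f q $ i)"
  unfolding vsum_index by simp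

lemma vsum_cong: "(\<And>q. q < m \<Longrightarrow> f q = g q) \<Longrightarrow> vsum d f m = vsum d g m"
  unfolding vsum_index by (intro eq_vecI) auto

lemma vsum_mult:
  assumes M: "M \<in> carrier_mat r d" and f: "\<And>q. q < m \<Longrightarrow> f q \<in> carrier_vec d"
  shows "M *\<^sub>v vsum d f m = vsum r (\<lambda>q. M *\<^sub>v f q) m"
proof (rule eq_vecI)
  show "dim_vec (M *\<^sub>v vsum d f m) = dim_vec (vsum r (\<lambda>q. M *\<^sub>v f q) m)" using M by simp
  fix i assume "i < dim_vec (vsum r (\<lambda>q. M *\<^sub>v f q) m)"
  hence i: "i < r" by simp
  have "(M *\<^sub>v vsum d f m) $ i = (\<Sum>c<d. M $$ (i,c) * (\<Sum>q<m. f q $ c))"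
    using M i by (simp add: scalar_prod_def vsum_nth atLeast0LessThan)
  also have "\<dots> = (\<Sum>q<m. \<Sum>c<d. M $$ (i,c) * f q $ c)"
    by (simp add: sum_distrib_left sum.swap[of _ "{..<d}"])
  also have "\<dots> = (\<Sum>q<m. (M *\<^sub>v f q) $ i)"
  proof (intro sum.cong refl)
    fix q assume "q \<in> {..<m}"
    hence fq: "f q \<in> carrier_vec d" using f by simp
    show "(\<Sum>c<d. M $$ (i,c) * f q $ c) = (M *\<^sub>v f q) $ i"
      using M i fq by (simp add: scalar_prod_def atLeast0LessThan)
  qed
  also have "\<dots> = vsum r (\<lambda>q. M *\<^sub>v f q) m $ i" using i by (simp add: vsum_nth)
  finally show "(M *\<^sub>v vsum d f m) $ i = vsum r (\<lambda>q. M *\<^sub>v f q) m $ i" .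
qed

lemma mlc_vec:
  fixes A Lm C :: "real mat"
  assumes A: "A \<in> carrier_mat d n" and Lm: "Lm \<in> carrier_mat d p" and C: "C \<in> carrier_mat p n"
    and v: "v \<in> carrier_vec n"
  shows "(A - Lm * C) *\<^sub>v v = A *\<^sub>v v - Lm *\<^sub>v (C *\<^sub>v v)"
proof -
  have LC: "Lm * C \<in> carrier_mat d n" using Lm C by simp
  have "(A - Lm * C) *\<^sub>v v = A *\<^sub>v v - (Lm * C) *\<^sub>v v" by (rule minus_mult_distrib_mat_vec[OF A LC v])
  also have "(Lm * C) *\<^sub>v v = Lm *\<^sub>v (C *\<^sub>v v)" by (rule assoc_mult_mat_vec[OF Lm C v])
  finally show ?thesis .
qed

lemma src_identity:
  fixes Aq Cq :: "nat \<Rightarrow> real mat" and zq :: "nat \<Rightarrow> real vec" and n :: "nat \<Rightarrow> nat"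
  assumes Aq: "\<And>q. q \<le> j \<Longrightarrow> Aq q \<in> carrier_mat d (n q)"
    and Cq: "\<And>q. q \<le> j \<Longrightarrow> Cq q \<in> carrier_mat p (n q)"
    and zq: "\<And>q. q \<le> j \<Longrightarrow> zq q \<in> carrier_vec (n q)"
    and nj: "n j = d" and Lm: "Lm \<in> carrier_mat d p" and a: "a \<in> carrier_vec d"
  shows "(Aq j - Lm * Cq j) *\<^sub>v a + vsum d (\<lambda>q. (Aq q - Lm * Cq q) *\<^sub>v zq q) j
           + Lm *\<^sub>v vsum p (\<lambda>q. Cq q *\<^sub>v zq q) (Suc j)
         - (Aq j *\<^sub>v zq j + vsum d (\<lambda>q. Aq q *\<^sub>v zq q) j)
         = (Aq j - Lm * Cq j) *\<^sub>v (a - zq j)"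
proof -
  have Aj: "Aq j \<in> carrier_mat d d" using Aq[of j] nj by simp
  have Cj: "Cq j \<in> carrier_mat p d" using Cq[of j] nj by simp
  have zj: "zq j \<in> carrier_vec d" using zq[of j] nj by simp
  have M: "Aq j - Lm * Cq j \<in> carrier_mat d d" using Aj Lm Cj by simp
  have e1: "vsum d (\<lambda>q. (Aq q - Lm * Cq q) *\<^sub>v zq q) j = vsum d (\<lambda>q. Aq q *\<^sub>v zq q - Lm *\<^sub>v (Cq q *\<^sub>v zq q)) j"
  proof (rule vsum_cong)
    fix q assume "q < j"
    thus "(Aq q - Lm * Cq q) *\<^sub>v zq q = Aq q *\<^sub>v zq q - Lm *\<^sub>v (Cq q *\<^sub>v zq q)"
      using mlc_vec[OF Aq[of q] Lm Cq[of q] zq[of q]] by simp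
  qed
  have e2: "Lm *\<^sub>v vsum p (\<lambda>q. Cq q *\<^sub>v zq q) (Suc j) = vsum d (\<lambda>q. Lm *\<^sub>v (Cq q *\<^sub>v zq q)) (Suc j)"
  proof (rule vsum_mult[OF Lm])
    fix q assume "q < Suc j"
    thus "Cq q *\<^sub>v zq q \<in> carrier_vec p" using mult_mat_vec_carrier[OF Cq[of q] zq[of q]] by simp
  qed
  have e3: "(Aq j - Lm * Cq j) *\<^sub>v (a - zq j) = (Aq j - Lm * Cq j) *\<^sub>v a - (Aq j *\<^sub>v zq j - Lm *\<^sub>v (Cq j *\<^sub>v zq j))"
    using mult_minus_distrib_mat_vec[OF M a zj] mlc_vec[OF Aj Lm Cj zj] by simp
  show ?thesis unfolding e1 e2 e3
  proof (rule eq_vecI)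
    fix i assume "i < dim_vec ((Aq j - Lm * Cq j) *\<^sub>v a - (Aq j *\<^sub>v zq j - Lm *\<^sub>v (Cq j *\<^sub>v zq j)))"
    hence i: "i < d" using Aj Lm by simp
    show "((Aq j - Lm * Cq j) *\<^sub>v a + vsum d (\<lambda>q. Aq q *\<^sub>v zq q - Lm *\<^sub>v (Cq q *\<^sub>v zq q)) j
           + vsum d (\<lambda>q. Lm *\<^sub>v (Cq q *\<^sub>v zq q)) (Suc j)
         - (Aq j *\<^sub>v zq j + vsum d (\<lambda>q. Aq q *\<^sub>v zq q) j)) $ i
        = ((Aq j - Lm * Cq j) *\<^sub>v a - (Aq j *\<^sub>v zq j - Lm *\<^sub>v (Cq j *\<^sub>v zq j))) $ i"
      using i Aj Lm Cj zj Aq Lm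
      by (simp add: vsum_nth sum_subtractf index_minus_vec)
  qed (use Aj Lm in simp)
qed

locale netrun2 = netrun +
  assumes blocks: "block_system N nd pd Ab Cb"
    and gains: "gains_ok N nd pd Ab Cb L"
    and traj: "true_traj N nd Ab z"
begin

lemma Ab_car: "j < N \<Longrightarrow> q \<le> j \<Longrightarrow> Ab j q \<in> carrier_mat (nd j) (nd q)"
  using blocks unfolding block_system_def by auto

lemma Cb_car: "j < N \<Longrightarrow> q \<le> j \<Longrightarrow> Cb j q \<in> carrier_mat (pd j) (nd q)"
  using blocks unfolding block_system_def by auto

lemma L_car: "j < N \<Longrightarrow> L j \<in> carrier_mat (nd j) (pd j)"
  using gains unfolding gains_ok_def by auto

lemma z_step: "j < N \<Longrightarrow> z (Suc k) j = Ab j j *\<^sub>v z k j + vsum (nd j) (\<lambda>q. Ab j q *\<^sub>v z k q) j"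
  using traj unfolding true_traj_def by auto

lemma z_dim: "j < N \<Longrightarrow> z k j \<in> carrier_vec (nd j)"
proof (cases k)
  case 0 then show "j < N \<Longrightarrow> z k j \<in> carrier_vec (nd j)" using traj unfolding true_traj_def by auto
next
  case (Suc k') then show "j < N \<Longrightarrow> z k j \<in> carrier_vec (nd j)"
    using z_step[of j k'] by (intro carrier_vecI) simp
qed

lemma zh_src_step: "j < N \<Longrightarrow> zh (Suc k) j j = (Ab j j - L j * Cb j j) *\<^sub>v zh k j j
           + vsum (nd j) (\<lambda>q. (Ab j q - L j * Cb j q) *\<^sub>v zh k j q) j
           + L j *\<^sub>v meas_output pd Cb z k j"
  using run unfolding fi_run_def by auto

lemma zh_dim: "i < N \<Longrightarrow> j < N \<Longrightarrow> zh k i j \<in> carrier_vec (nd j)"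
proof (cases k)
  case 0 then show "i < N \<Longrightarrow> j < N \<Longrightarrow> zh k i j \<in> carrier_vec (nd j)"
    using run unfolding fi_run_def by auto
next
  case (Suc k')
  show "i < N \<Longrightarrow> j < N \<Longrightarrow> zh k i j \<in> carrier_vec (nd j)"
  proof -
    assume i: "i < N" and j: "j < N"
    show ?thesis
    proof (cases "i = j")
      case True
      have "dim_vec (zh (Suc k') j j) = nd j" unfolding zh_src_step[OF j, of k'] using L_car[OF j] by simp
      then show ?thesis using Suc True by (intro carrier_vecI) simp
    next
      case False
      then obtain u where "zh (Suc k') i j = Ab j j *\<^sub>v zh k' u j + vsum (nd j) (\<lambda>q. Ab j q *\<^sub>v zh k' i q) j"
        using step[OF i j False, of k'] by blast
      then show ?thesis using Suc by (intro carrier_vecI) simp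
    qed
  qed
qed

lemma nonsrc_correct:
  assumes j: "j < N" and low: "\<forall>q<j. \<forall>i<N. \<forall>s\<ge>K0. zh s i q = z s q"
  shows "\<forall>i t. i < N \<longrightarrow> tau k i j = Some t \<longrightarrow> K0 + t \<le> k \<longrightarrow> zh (k - t) j j = z (k - t) j \<longrightarrow> zh k i j = z k j"
proof (induction k)
  case 0
  show ?case
  proof (intro allI impI)
    fix i t assume i: "i < N" and tt: "tau 0 i j = Some t" and kt: "K0 + t \<le> 0" and src: "zh (0 - t) j j = z (0 - t) j"
    have "i = j" using tau_init[OF i j] tt by auto
    thus "zh 0 i j = z 0 j" using src kt by simp
  qed
next
  case (Suc k)
  show ?case
  proof (intro allI impI)
    fix i t assume i: "i < N" and tt: "tau (Suc k) i j = Some t" and kt: "K0 + t \<le> Suc k"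
      and src: "zh (Suc k - t) j j = z (Suc k - t) j"
    show "zh (Suc k) i j = z (Suc k) j"
    proof (cases "i = j")
      case True
      then have "t = 0" using tau_src[OF j] tt by simp
      then show ?thesis using src True by simp
    next
      case False
      obtain u where t1: "1 \<le> t" and u: "u < N" and tu: "tau k u j = Some (t - 1)"
        and zu: "zh (Suc k) i j = Ab j j *\<^sub>v zh k u j + vsum (nd j) (\<lambda>q. Ab j q *\<^sub>v zh k i q) j"
        using step[OF i j False, of k] tt by blast
      have e: "k - (t - 1) = Suc k - t" using t1 kt by linarith
      have k1: "K0 + (t - 1) \<le> k" using t1 kt by linarith
      have "zh k u j = z k j"
        using Suc.IH[rule_format, OF u tu k1] src unfolding e by simp
      moreover have "vsum (nd j) (\<lambda>q. Ab j q *\<^sub>v zh k i q) j = vsum (nd j) (\<lambda>q. Ab j q *\<^sub>v z k q) j"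
        by (rule vsum_cong) (use low i kt t1 in auto)
      ultimately show ?thesis using zu z_step[OF j] by simp
    qed
  qed
qed

lemma vec_eq_of_minus_zero: "a \<in> carrier_vec n \<Longrightarrow> b \<in> carrier_vec n \<Longrightarrow> a - b = 0\<^sub>v n \<Longrightarrow> (a :: real vec) = b"
proof (rule eq_vecI)
  fix i assume a: "a \<in> carrier_vec n" and b: "b \<in> carrier_vec n" and e: "a - b = 0\<^sub>v n" and i: "i < dim_vec b"
  have "(a - b) $ i = 0" using e i b by simp
  thus "a $ i = b $ i" using i by simp
qed simp

lemma mat_mult_zero_vec: "M \<in> carrier_mat r c \<Longrightarrow> (M :: real mat) *\<^sub>v 0\<^sub>v c = 0\<^sub>v r"
  by (intro eq_vecI) (auto simp: scalar_prod_def)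

lemma src_correct:
  assumes j: "j < N" and low: "\<forall>q<j. \<forall>s\<ge>K0. zh s j q = z s q"
  shows "\<forall>k. K0 + nd j \<le> k \<longrightarrow> zh k j j = z k j"
proof -
  define M where "M = Ab j j - L j * Cb j j"
  have Aj: "Ab j j \<in> carrier_mat (nd j) (nd j)" using Ab_car[OF j] by simp
  have Cj: "Cb j j \<in> carrier_mat (pd j) (nd j)" using Cb_car[OF j] by simp
  have Mc: "M \<in> carrier_mat (nd j) (nd j)" unfolding M_def using Aj Cj L_car[OF j] by simp
  have "nilpotent_mat M (nd j)" using gains j unfolding gains_ok_def M_def by auto
  hence Mn: "M ^\<^sub>m nd j = 0\<^sub>m (nd j) (nd j)" by (rule nilpotent_pow_dim[OF Mc])
  define e where "e k = zh k j j - z k j" for k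
  have ec: "e k \<in> carrier_vec (nd j)" for k unfolding e_def using zh_dim[OF j j] z_dim[OF j] by simp
  have estep: "e (Suc k) = M *\<^sub>v e k" if k: "K0 \<le> k" for k
  proof -
    have "vsum (nd j) (\<lambda>q. (Ab j q - L j * Cb j q) *\<^sub>v zh k j q) j
        = vsum (nd j) (\<lambda>q. (Ab j q - L j * Cb j q) *\<^sub>v z k q) j"
      by (rule vsum_cong) (use low k in auto)
    hence zs: "zh (Suc k) j j = M *\<^sub>v zh k j j + vsum (nd j) (\<lambda>q. (Ab j q - L j * Cb j q) *\<^sub>v z k q) j
         + L j *\<^sub>v vsum (pd j) (\<lambda>q. Cb j q *\<^sub>v z k q) (Suc j)"
      unfolding zh_src_step[OF j] M_def meas_output_def by simp
    have "e (Suc k) = M *\<^sub>v (zh k j j - z k j)"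
      unfolding e_def zs z_step[OF j] M_def
      by (rule src_identity[of j "Ab j" "nd j" nd "Cb j" "pd j" "z k" "L j" "zh k j j"])
        (use Ab_car[OF j] Cb_car[OF j] z_dim j L_car[OF j] zh_dim[OF j j] in auto)
    thus ?thesis unfolding e_def .
  qed
  have epow: "e (K0 + n) = M ^\<^sub>m n *\<^sub>v e K0" for n
  proof (induction n)
    case 0 show ?case using ec[of K0] Mc by simp
  next
    case (Suc n)
    have "e (K0 + Suc n) = M *\<^sub>v e (K0 + n)" using estep[of "K0 + n"] by simp
    also have "\<dots> = M *\<^sub>v (M ^\<^sub>m n *\<^sub>v e K0)" using Suc.IH by simp
    also have "\<dots> = (M * M ^\<^sub>m n) *\<^sub>v e K0" using Mc ec[of K0]
      by (simp add: assoc_mult_mat_vec[OF Mc pow_carrier_mat[OF Mc] ec])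
    also have "\<dots> = M ^\<^sub>m Suc n *\<^sub>v e K0" using pow_Suc_left[OF Mc, of n] by simp
    finally show ?case .
  qed
  have ez: "e (K0 + nd j + n) = 0\<^sub>v (nd j)" for n
  proof (induction n)
    case 0 show ?case using epow[of "nd j"] Mn ec[of K0] by simp
  next
    case (Suc n)
    have "e (K0 + nd j + Suc n) = M *\<^sub>v e (K0 + nd j + n)" using estep[of "K0 + nd j + n"] by simp
    thus ?case using Suc.IH mat_mult_zero_vec[OF Mc] by simp
  qed
  show ?thesis
  proof (intro allI impI)
    fix k assume k: "K0 + nd j \<le> k"
    have "e k = 0\<^sub>v (nd j)" using ez[of "k - (K0 + nd j)"] k by simp
    thus "zh k j j = z k j" unfolding e_def using vec_eq_of_minus_zero zh_dim[OF j j] z_dim[OF j] by blast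
  qed
qed

end

context netrun2 begin
lemma all_correct:
  assumes conn: "joint_strong_conn N E T"
  shows "j < N \<Longrightarrow> \<forall>k. (\<Sum>q\<le>j. nd q) + Suc j * (2*(N-1)*T) \<le> k \<longrightarrow> (\<forall>i<N. zh k i j = z k j)"
proof (induction j rule: less_induct)
  case (less j)
  note j = less.prems
  define D where "D = 2*(N-1)*T"
  define K0 where "K0 = (\<Sum>q<j. nd q) + j*D"
  have low_all: "\<forall>q<j. \<forall>i<N. \<forall>s\<ge>K0. zh s i q = z s q"
  proof (intro allI impI)
    fix q i s assume q: "q < j" and i: "i < N" and s: "K0 \<le> s"
    have "(\<Sum>q'\<le>q. nd q') \<le> (\<Sum>q'<j. nd q')" by (rule sum_mono2) (use q in auto)
    moreover have "Suc q * D \<le> j * D" using q by (intro mult_le_mono1) simp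
    ultimately have "(\<Sum>q'\<le>q. nd q') + Suc q * (2*(N-1)*T) \<le> s" using s unfolding K0_def D_def by linarith
    thus "zh s i q = z s q" using less.IH[OF q] q j i by auto
  qed
  have low: "\<forall>q<j. \<forall>s\<ge>K0. zh s j q = z s q" using low_all j by auto
  have src: "\<forall>k. K0 + nd j \<le> k \<longrightarrow> zh k j j = z k j" by (rule src_correct[OF j low])
  have Kf: "(\<Sum>q\<le>j. nd q) + Suc j * D = K0 + nd j + D"
    unfolding K0_def lessThan_Suc_atMost[symmetric] by simp
  show ?case
  proof (intro allI impI)
    fix k i assume k: "(\<Sum>q\<le>j. nd q) + Suc j * (2*(N-1)*T) \<le> k" and i: "i < N"
    have k': "K0 + nd j + D \<le> k" using k Kf unfolding D_def by simp
    show "zh k i j = z k j"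
    proof (cases "i = j")
      case True
      then show ?thesis using src k' by simp
    next
      case False
      have N2: "2 \<le> N" using i j False by linarith
      have "(N - 1) * T \<le> D" unfolding D_def by simp
      hence "(N - 1) * T \<le> k" using k' by linarith
      then obtain t where tt: "tau k i j = Some t" and tl: "t < N * T" using tau_bound[OF conn j i] by blast
      have "N * T \<le> D" unfolding D_def using N2 by (intro mult_le_mono1) linarith
      hence tD: "t \<le> D" using tl by linarith
      have "zh (k - t) j j = z (k - t) j" using src tD k' by simp
      thus ?thesis using nonsrc_correct[OF j low_all, rule_format, of i k t] i tt tD k' by simp
    qed
  qed
qed
end

lemma deadbeat_exists:
  fixes A C :: "real mat"
  assumes A: "A \<in> carrier_mat d d" and C: "C \<in> carrier_mat p d" and obs: "observable_pair A C d"
  shows "\<exists>G\<in>carrier_mat d p. nilpotent_mat (A - G * C) d"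
proof -
  have I: "1\<^sub>m d \<in> carrier_mat d d" by simp
  have IA: "1\<^sub>m d * A = A" using A by simp
  have h: "\<forall>v\<in>carrier_vec d. 1\<^sub>m d *\<^sub>v v = v \<and> (\<forall>k<d. C *\<^sub>v ((1\<^sub>m d * A) ^\<^sub>m k *\<^sub>v v) = 0\<^sub>v p) \<longrightarrow> v = 0\<^sub>v d"
    using obs C unfolding observable_pair_def IA by auto
  obtain G q where G: "G \<in> carrier_mat d p" and nil: "(1\<^sub>m d * A - G * C) ^\<^sub>m q * 1\<^sub>m d = 0\<^sub>m d d"
    using rel_deadbeat[OF A I _ C h] by auto
  have M: "A - G * C \<in> carrier_mat d d" using A G C by simp
  have "(A - G * C) ^\<^sub>m q = 0\<^sub>m d d" using nil IA right_mult_one_mat[OF pow_carrier_mat[OF M, of q]] by simp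
  thus ?thesis using G unfolding nilpotent_mat_def by blast
qed

theorem corollary1:
  fixes N T :: nat and nd pd :: "nat \<Rightarrow> nat"
    and Ab Cb :: "nat \<Rightarrow> nat \<Rightarrow> real mat"
    and E :: "nat \<Rightarrow> (nat \<times> nat) set"
  assumes blocks: "block_system N nd pd Ab Cb"
    and graphs: "joint_strong_conn N E T"
  shows "(\<exists>L. gains_ok N nd pd Ab Cb L) \<and>
         (\<forall>L. gains_ok N nd pd Ab Cb L \<longrightarrow>
           (\<forall>z tau zh. true_traj N nd Ab z \<and> fi_run N nd pd Ab Cb L E z tau zh \<longrightarrow>
              (\<forall>k i j. k \<ge> (\<Sum>q<N. nd q) + 2 * N * (N - 1) * T \<and> i < N \<and> j < N
                  \<longrightarrow> zh k i j = z k j)))"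
proof (intro conjI allI impI)
  have ex: "\<forall>j<N. \<exists>G. G \<in> carrier_mat (nd j) (pd j) \<and> nilpotent_mat (Ab j j - G * Cb j j) (nd j)"
  proof (intro allI impI)
    fix j assume j: "j < N"
    have A: "Ab j j \<in> carrier_mat (nd j) (nd j)" and C: "Cb j j \<in> carrier_mat (pd j) (nd j)"
      and ob: "observable_pair (Ab j j) (Cb j j) (nd j)" using blocks j unfolding block_system_def by auto
    show "\<exists>G. G \<in> carrier_mat (nd j) (pd j) \<and> nilpotent_mat (Ab j j - G * Cb j j) (nd j)"
      using deadbeat_exists[OF A C ob] by blast
  qed
  define L where "L j = (SOME G. G \<in> carrier_mat (nd j) (pd j) \<and> nilpotent_mat (Ab j j - G * Cb j j) (nd j))" for j
  have "gains_ok N nd pd Ab Cb L" unfolding gains_ok_def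
  proof (intro allI impI)
    fix j assume j: "j < N"
    show "L j \<in> carrier_mat (nd j) (pd j) \<and> nilpotent_mat (Ab j j - L j * Cb j j) (nd j)"
      unfolding L_def by (rule someI_ex) (use ex j in blast)
  qed
  thus "\<exists>L. gains_ok N nd pd Ab Cb L" by blast
next
  fix L z tau zh k i j
  assume g: "gains_ok N nd pd Ab Cb L"
    and r: "true_traj N nd Ab z \<and> fi_run N nd pd Ab Cb L E z tau zh"
    and kij: "(\<Sum>q<N. nd q) + 2 * N * (N - 1) * T \<le> k \<and> i < N \<and> j < N"
  interpret netrun2 N nd pd Ab Cb L E z tau zh
    using r g blocks by unfold_locales auto
  have j: "j < N" and i: "i < N" using kij by auto
  have "(\<Sum>q\<le>j. nd q) \<le> (\<Sum>q<N. nd q)" by (rule sum_mono2) (use j in auto)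
  moreover have "Suc j * (2*(N-1)*T) \<le> N * (2*(N-1)*T)" using j by (intro mult_le_mono1) simp
  moreover have "N * (2*(N-1)*T) = 2 * N * (N - 1) * T" by simp
  ultimately have "(\<Sum>q\<le>j. nd q) + Suc j * (2*(N-1)*T) \<le> k" using kij by linarith
  thus "zh k i j = z k j" using all_correct[OF graphs j] i by blast
qed

end
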